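(* The following rules are sound, i.e. for every instance, if all premisses are valid then the conclusion is valid: $(\top R)$: $\Gamma\Rightarrow\Delta,\top$ (no premisses); $(\mathrm{lit}L)$: from $N_c,\Gamma\Rightarrow P_c$ infer $N_c,\Gamma\Rightarrow\Delta$; $(\mathrm{lit}R)$: from $P_c,\Gamma\Rightarrow$ (empty succedent) infer $\Gamma\Rightarrow\Delta,N_c$; for a Venn diagram $d=(L,\mathcal Z(L),S)$ with $|S|>1$ and $d_i=(L,\mathcal Z(L),S_i)$ ($i=1,2$) with $S_1\cup S_2=S$: $(\mathrm{sep}L)$: from $d_1,\Gamma\Rightarrow\Delta$ and $d_2,\Gamma\Rightarrow\Delta$ infer $d,\Gamma\Rightarrow\Delta$, and $(\mathrm{sep}R)$: from $\Gamma\Rightarrow\Delta,d_1,d_2$ infer $\Gamma\Rightarrow\Delta,d$; for a Venn diagram $d$ whose only shaded zone is $z=(\{n_1,\dots,n_k\},\{o_1,\dots,o_l\})$: $(\mathrm{dec}L)$: from $P_{n_1},\dots,P_{n_k},N_{o_1},\dots,N_{o_l},\Gamma\Rightarrow\Delta$ infer $d,\Gamma\Rightarrow\Delta$, and $(\mathrm{dec}R)$: from $\Gamma\Rightarrow\Delta,P_{n_i}$ for all $1\le i\le k$ and $\Gamma\Rightarrow\Delta,N_{o_j}$ for all $1\le j\le l$ infer $\Gamma\Rightarrow\Delta,d$. Here $\Gamma,\Delta$ are arbitrary finite multisets of compound diagrams and $c\in\mathcal V$.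
   Context: Fix a countably infinite set $\mathcal V$ of propositional variables. A Heyting algebra $(H,\vee,\wedge,\to,0,1)$ is a bounded distributive lattice with a binary operation $\to$ such that $c\wedge a\le b\iff c\le a\to b$; $-a:=a\to0$; empty meets are $1$, empty joins $0$. A valuation is a map $v:\mathcal V\to H$. For a finite $L\subset\mathcal V$, a zone over $L$ is a pair $z=(\mathrm{in}(z),\mathrm{out}(z))$ of disjoint subsets of $L$ with union $L$; $\mathcal Z(L)$ is the set of all zones over $L$; $v(z)=\bigwedge_{c\in\mathrm{in}(z)}v(c)\wedge\bigwedge_{c\in\mathrm{out}(z)}-v(c)$ and $m_v(z)=\big(\bigwedge_{c\in\mathrm{in}(z)}v(c)\big)\to\big(\bigvee_{c\in\mathrm{out}(z)}v(c)\big)$. Unitary diagrams are of three kinds: Venn diagrams $d=(L,\mathcal Z(L),S)$, $S\subseteq\mathcal Z(L)$ shaded, $[\![d]\!]_v=\bigvee_{z\in S}v(z)$; pure Euler diagrams $d=(L,Z)$, $Z\subseteq\mathcal Z(L)$, missing zones $M(d)=\mathcal Z(L)\setminus Z$, $[\![d]\!]_v=\bigwedge_{z\in M(d)}m_v(z)$; Euler–Venn diagrams $d=(L,Z,S)$, $S\subseteq Z\subseteq\mathcal Z(L)$, $[\![d]\!]_v=[\![(L,Z)]\!]_v\to[\![(L,\mathcal Z(L),S)]\!]_v$. Special Venn diagrams: $\top=(\emptyset,\{(\emptyset,\emptyset)\},\{(\emptyset,\emptyset)\})$, $P_c=(\{c\},\mathcal Z(\{c\}),\{(\{c\},\emptyset)\})$,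 $N_c=(\{c\},\mathcal Z(\{c\}),\{(\emptyset,\{c\})\})$. Compound diagrams are built from unitary ones with $\wedge,\vee,\to$, interpreted by meet, join and Heyting implication. A sequent $\Gamma\Rightarrow\Delta$ (finite multisets of compound diagrams) is valid iff for every Heyting algebra and valuation $v$, $\bigwedge_{D\in\Gamma}[\![D]\!]_v\le\bigvee_{E\in\Delta}[\![E]\!]_v$. *)

theory Defs
  imports Main "HOL-Library.Multiset"
begin

unbundle lattice_syntax

class heyting_algebra = bounded_lattice + distrib_lattice +
  fixes himp :: "'a \<Rightarrow> 'a \<Rightarrow> 'a"  (infixr "\<leadsto>" 60)
  assumes himp_adj: "c \<sqinter> a \<le> b \<longleftrightarrow> c \<le> a \<leadsto> b"

definition hneg :: "'a::heyting_algebra \<Rightarrow> 'a" where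
  "hneg a = a \<leadsto> bot"

definition hMeet :: "('b \<Rightarrow> 'a::heyting_algebra) \<Rightarrow> 'b set \<Rightarrow> 'a" where
  "hMeet f A = comm_monoid_set.F inf top f A"

definition hJoin :: "('b \<Rightarrow> 'a::heyting_algebra) \<Rightarrow> 'b set \<Rightarrow> 'a" where
  "hJoin f A = comm_monoid_set.F sup bot f A"

definition msMeet :: "('b \<Rightarrow> 'a::heyting_algebra) \<Rightarrow> 'b multiset \<Rightarrow> 'a" where
  "msMeet f M = fold_mset inf top (image_mset f M)"

definition msJoin :: "('b \<Rightarrow> 'a::heyting_algebra) \<Rightarrow> 'b multiset \<Rightarrow> 'a" where
  "msJoin f M = fold_mset sup bot (image_mset f M)"

text \<open>Propositional variables: the countably infinite set nat.
  A zone is a pair (in, out).\<close>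
type_synonym var = nat
type_synonym zone = "var set \<times> var set"

definition zones :: "var set \<Rightarrow> zone set" where
  "zones L = {z. fst z \<inter> snd z = {} \<and> fst z \<union> snd z = L}"

text \<open>Unitary diagrams. \<open>Venn L S\<close> stands for the triple (L, zones L, S).\<close>
datatype udiag =
    Venn "var set" "zone set"
  | Euler "var set" "zone set"
  | EulerVenn "var set" "zone set" "zone set"

datatype cdiag =
    Unit udiag
  | CAnd cdiag cdiag
  | COr cdiag cdiag
  | CImp cdiag cdiag

fun wf_u :: "udiag \<Rightarrow> bool" where
  "wf_u (Venn L S) = (finite L \<and> S \<subseteq> zones L)"
| "wf_u (Euler L Z) = (finite L \<and> Z \<subseteq> zones L)"
| "wf_u (EulerVenn L Z S) = (finite L \<and> S \<subseteq> Z \<and> Z \<subseteq> zones L)"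

fun wf_c :: "cdiag \<Rightarrow> bool" where
  "wf_c (Unit d) = wf_u d"
| "wf_c (CAnd a b) = (wf_c a \<and> wf_c b)"
| "wf_c (COr a b) = (wf_c a \<and> wf_c b)"
| "wf_c (CImp a b) = (wf_c a \<and> wf_c b)"

definition zval :: "(var \<Rightarrow> 'a::heyting_algebra) \<Rightarrow> zone \<Rightarrow> 'a" where
  "zval v z = hMeet v (fst z) \<sqinter> hMeet (\<lambda>c. hneg (v c)) (snd z)"

definition mval :: "(var \<Rightarrow> 'a::heyting_algebra) \<Rightarrow> zone \<Rightarrow> 'a" where
  "mval v z = hMeet v (fst z) \<leadsto> hJoin v (snd z)"

fun usem :: "(var \<Rightarrow> 'a::heyting_algebra) \<Rightarrow> udiag \<Rightarrow> 'a" where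
  "usem v (Venn L S) = hJoin (zval v) S"
| "usem v (Euler L Z) = hMeet (mval v) (zones L - Z)"
| "usem v (EulerVenn L Z S) = hMeet (mval v) (zones L - Z) \<leadsto> hJoin (zval v) S"

fun csem :: "(var \<Rightarrow> 'a::heyting_algebra) \<Rightarrow> cdiag \<Rightarrow> 'a" where
  "csem v (Unit d) = usem v d"
| "csem v (CAnd a b) = csem v a \<sqinter> csem v b"
| "csem v (COr a b) = csem v a \<squnion> csem v b"
| "csem v (CImp a b) = csem v a \<leadsto> csem v b"

definition valid :: "'a::heyting_algebra itself \<Rightarrow> cdiag multiset \<Rightarrow> cdiag multiset \<Rightarrow> bool" where
  "valid _ \<Gamma> \<Delta> = (\<forall>v::var \<Rightarrow> 'a. msMeet (csem v) \<Gamma> \<le> msJoin (csem v) \<Delta>)"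

definition wf_ms :: "cdiag multiset \<Rightarrow> bool" where
  "wf_ms M = (\<forall>D\<in>#M. wf_c D)"

definition TopD :: cdiag where
  "TopD = Unit (Venn {} {({}, {})})"

definition PD :: "var \<Rightarrow> cdiag" where
  "PD c = Unit (Venn {c} {({c}, {})})"

definition ND :: "var \<Rightarrow> cdiag" where
  "ND c = Unit (Venn {c} {({}, {c})})"

end

theory Submission
  imports Defs
begin

lemma msMeet_add_mset[simp]: "msMeet f (add_mset x M) = (f x :: 'a::heyting_algebra) \<sqinter> msMeet f M"
proof -
  interpret comp_fun_commute "inf :: 'a \<Rightarrow> _" by (rule comp_fun_idem_inf[THEN comp_fun_idem.axioms(1)])
  show ?thesis unfolding msMeet_def by simp
qed

lemma msJoin_add_mset[simp]: "msJoin f (add_mset x M) = (f x :: 'a::heyting_algebra) \<squnion> msJoin f M"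
proof -
  interpret comp_fun_commute "sup :: 'a \<Rightarrow> _" by (rule comp_fun_idem_sup[THEN comp_fun_idem.axioms(1)])
  show ?thesis unfolding msJoin_def by simp
qed

lemma msMeet_empty[simp]: "msMeet f {#} = top" unfolding msMeet_def by simp
lemma msJoin_empty[simp]: "msJoin f {#} = bot" unfolding msJoin_def by simp

lemma msMeet_plus[simp]: "msMeet f (M + N) = msMeet f M \<sqinter> msMeet f N"
  by (induction M) (auto simp: inf_assoc)
lemma msJoin_plus[simp]: "msJoin f (M + N) = msJoin f M \<squnion> msJoin f N"
  by (induction M) (auto simp: sup_assoc)

lemma msMeet_image: "msMeet f (image_mset g M) = msMeet (f \<circ> g) M"
  by (induction M) auto

lemma msMeet_mset_set: "finite A \<Longrightarrow> msMeet f (mset_set A) = hMeet f A"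
proof (induction A rule: finite_induct)
  case empty
  then show ?case
    by (simp add: hMeet_def comm_monoid_set.empty[OF comm_monoid_set.intro[OF inf_top.comm_monoid_axioms]])
next
  case (insert x F)
  then show ?case
    by (simp add: hMeet_def comm_monoid_set.insert[OF comm_monoid_set.intro[OF inf_top.comm_monoid_axioms]])
qed

lemma hMeet_empty[simp]: "hMeet f {} = top"
  by (simp add: hMeet_def comm_monoid_set.empty[OF comm_monoid_set.intro[OF inf_top.comm_monoid_axioms]])
lemma hJoin_empty[simp]: "hJoin f {} = bot"
  by (simp add: hJoin_def comm_monoid_set.empty[OF comm_monoid_set.intro[OF sup_bot.comm_monoid_axioms]])
lemma hMeet_insert[simp]: "finite A \<Longrightarrow> x \<notin> A \<Longrightarrow> hMeet f (insert x A) = f x \<sqinter> hMeet f A"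
  by (simp add: hMeet_def comm_monoid_set.insert[OF comm_monoid_set.intro[OF inf_top.comm_monoid_axioms]])
lemma hJoin_insert[simp]: "finite A \<Longrightarrow> x \<notin> A \<Longrightarrow> hJoin f (insert x A) = f x \<squnion> hJoin f A"
  by (simp add: hJoin_def comm_monoid_set.insert[OF comm_monoid_set.intro[OF sup_bot.comm_monoid_axioms]])

lemma hJoin_union: "finite A \<Longrightarrow> finite B \<Longrightarrow> hJoin f (A \<union> B) = hJoin f A \<squnion> hJoin f B"
proof (induction A rule: finite_induct)
  case (insert x F)
  show ?case
  proof (cases "x \<in> B")
    case True
    then have "insert x F \<union> B = F \<union> B" by auto
    moreover have "f x \<le> hJoin f B"
    proof -
      have "B = insert x (B - {x})" using True by auto
      then have "hJoin f B = f x \<squnion> hJoin f (B - {x})" using insert.prems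
        by (metis finite_Diff hJoin_insert Diff_iff singletonI)
      then show ?thesis by simp
    qed
    ultimately show ?thesis using insert by (simp add: sup_assoc le_supI2 sup.absorb2)
  next
    case False
    then show ?thesis using insert by (simp add: sup_assoc)
  qed
qed simp

lemma hMeet_ge: "finite A \<Longrightarrow> (\<forall>x\<in>A. g \<le> d \<squnion> f x) \<Longrightarrow> g \<le> d \<squnion> hMeet f A"
proof (induction A rule: finite_induct)
  case (insert x F)
  then have "g \<le> (d \<squnion> f x) \<sqinter> (d \<squnion> hMeet f F)" by auto
  then show ?case using insert by (simp add: sup_inf_distrib1)
qed simp

lemma hneg_bot: "(x::'a::heyting_algebra) \<sqinter> hneg x = bot"
proof -
  have "hneg x \<sqinter> x \<le> bot" unfolding hneg_def by (simp add: himp_adj)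
  then show ?thesis by (simp add: inf.commute bot_unique)
qed

lemma zones_fin: "finite L \<Longrightarrow> z \<in> zones L \<Longrightarrow> finite (fst z) \<and> finite (snd z)"
  unfolding zones_def by (auto intro: finite_subset)

lemma PD_sem[simp]: "csem v (PD c) = v c"
  by (simp add: PD_def zval_def)
lemma ND_sem[simp]: "csem v (ND c) = hneg (v c)"
  by (simp add: ND_def zval_def)
lemma Top_sem[simp]: "csem v TopD = top"
  by (simp add: TopD_def zval_def)

theorem lemma7:
  fixes H :: "'a::heyting_algebra itself"
  shows
   \<comment> \<open>(top R)\<close>
   "(\<forall>\<Gamma> \<Delta>. wf_ms \<Gamma> \<longrightarrow> wf_ms \<Delta> \<longrightarrow> valid H \<Gamma> (\<Delta> + {#TopD#}))
  \<comment> \<open>(lit L)\<close>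
  \<and> (\<forall>\<Gamma> \<Delta> c. wf_ms \<Gamma> \<longrightarrow> wf_ms \<Delta> \<longrightarrow>
        valid H ({#ND c#} + \<Gamma>) {#PD c#} \<longrightarrow> valid H ({#ND c#} + \<Gamma>) \<Delta>)
  \<comment> \<open>(lit R)\<close>
  \<and> (\<forall>\<Gamma> \<Delta> c. wf_ms \<Gamma> \<longrightarrow> wf_ms \<Delta> \<longrightarrow>
        valid H ({#PD c#} + \<Gamma>) {#} \<longrightarrow> valid H \<Gamma> (\<Delta> + {#ND c#}))
  \<comment> \<open>(sep L)\<close>
  \<and> (\<forall>\<Gamma> \<Delta> L S S1 S2. wf_ms \<Gamma> \<longrightarrow> wf_ms \<Delta> \<longrightarrow>
        finite L \<longrightarrow> S \<subseteq> zones L \<longrightarrow> card S > 1 \<longrightarrow> S1 \<union> S2 = S \<longrightarrow>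
        valid H ({#Unit (Venn L S1)#} + \<Gamma>) \<Delta> \<longrightarrow>
        valid H ({#Unit (Venn L S2)#} + \<Gamma>) \<Delta> \<longrightarrow>
        valid H ({#Unit (Venn L S)#} + \<Gamma>) \<Delta>)
  \<comment> \<open>(sep R)\<close>
  \<and> (\<forall>\<Gamma> \<Delta> L S S1 S2. wf_ms \<Gamma> \<longrightarrow> wf_ms \<Delta> \<longrightarrow>
        finite L \<longrightarrow> S \<subseteq> zones L \<longrightarrow> card S > 1 \<longrightarrow> S1 \<union> S2 = S \<longrightarrow>
        valid H \<Gamma> (\<Delta> + {#Unit (Venn L S1), Unit (Venn L S2)#}) \<longrightarrow>
        valid H \<Gamma> (\<Delta> + {#Unit (Venn L S)#}))
  \<comment> \<open>(dec L)\<close>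
  \<and> (\<forall>\<Gamma> \<Delta> L z. wf_ms \<Gamma> \<longrightarrow> wf_ms \<Delta> \<longrightarrow>
        finite L \<longrightarrow> z \<in> zones L \<longrightarrow>
        valid H (image_mset PD (mset_set (fst z)) + image_mset ND (mset_set (snd z)) + \<Gamma>) \<Delta> \<longrightarrow>
        valid H ({#Unit (Venn L {z})#} + \<Gamma>) \<Delta>)
  \<comment> \<open>(dec R)\<close>
  \<and> (\<forall>\<Gamma> \<Delta> L z. wf_ms \<Gamma> \<longrightarrow> wf_ms \<Delta> \<longrightarrow>
        finite L \<longrightarrow> z \<in> zones L \<longrightarrow>
        (\<forall>n\<in>fst z. valid H \<Gamma> (\<Delta> + {#PD n#})) \<longrightarrow>
        (\<forall>m\<in>snd z. valid H \<Gamma> (\<Delta> + {#ND m#})) \<longrightarrow>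
        valid H \<Gamma> (\<Delta> + {#Unit (Venn L {z})#}))"
proof (intro conjI allI impI)
  fix \<Gamma> \<Delta> :: "cdiag multiset"
  show "valid H \<Gamma> (\<Delta> + {#TopD#})" by (simp add: valid_def)
next
  fix \<Gamma> \<Delta> :: "cdiag multiset" and c
  assume h: "valid H ({#ND c#} + \<Gamma>) {#PD c#}"
  show "valid H ({#ND c#} + \<Gamma>) \<Delta>" unfolding valid_def
  proof
    fix v :: "var \<Rightarrow> 'a"
    have "hneg (v c) \<sqinter> msMeet (csem v) \<Gamma> \<le> v c" using h[unfolded valid_def, rule_format, of v] by simp
    moreover have "hneg (v c) \<sqinter> msMeet (csem v) \<Gamma> \<le> hneg (v c)" by simp
    ultimately have "hneg (v c) \<sqinter> msMeet (csem v) \<Gamma> \<le> bot"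
      by (metis hneg_bot inf.commute le_inf_iff)
    then show "msMeet (csem v) ({#ND c#} + \<Gamma>) \<le> msJoin (csem v) \<Delta>"
      by (simp add: bot_unique)
  qed
next
  fix \<Gamma> \<Delta> :: "cdiag multiset" and c
  assume h: "valid H ({#PD c#} + \<Gamma>) {#}"
  show "valid H \<Gamma> (\<Delta> + {#ND c#})" unfolding valid_def
  proof
    fix v :: "var \<Rightarrow> 'a"
    have "msMeet (csem v) \<Gamma> \<sqinter> v c \<le> bot" using h[unfolded valid_def, rule_format, of v] by (simp add: inf.commute)
    then have "msMeet (csem v) \<Gamma> \<le> hneg (v c)" by (simp add: hneg_def himp_adj)
    then show "msMeet (csem v) \<Gamma> \<le> msJoin (csem v) (\<Delta> + {#ND c#})"
      by (simp add: le_supI1)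
  qed
next
  fix \<Gamma> \<Delta> :: "cdiag multiset" and L S S1 S2
  assume fL: "finite L" and SL: "S \<subseteq> zones L" and U: "S1 \<union> S2 = S"
    and h1: "valid H ({#Unit (Venn L S1)#} + \<Gamma>) \<Delta>"
    and h2: "valid H ({#Unit (Venn L S2)#} + \<Gamma>) \<Delta>"
  have fz: "finite (zones L)" unfolding zones_def using fL
    by (rule_tac finite_subset[of _ "Pow L \<times> Pow L"]) auto
  have f1: "finite S1" "finite S2" using U SL fz by (auto intro: finite_subset)
  show "valid H ({#Unit (Venn L S)#} + \<Gamma>) \<Delta>" unfolding valid_def
  proof
    fix v :: "var \<Rightarrow> 'a"
    have a: "hJoin (zval v) S1 \<sqinter> msMeet (csem v) \<Gamma> \<le> msJoin (csem v) \<Delta>"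
      using h1[unfolded valid_def, rule_format, of v] by simp
    have b: "hJoin (zval v) S2 \<sqinter> msMeet (csem v) \<Gamma> \<le> msJoin (csem v) \<Delta>"
      using h2[unfolded valid_def, rule_format, of v] by simp
    have "hJoin (zval v) S = hJoin (zval v) S1 \<squnion> hJoin (zval v) S2"
      using hJoin_union[OF f1] U by simp
    then show "msMeet (csem v) ({#Unit (Venn L S)#} + \<Gamma>) \<le> msJoin (csem v) \<Delta>"
      using a b by (simp add: inf_sup_distrib2)
  qed
next
  fix \<Gamma> \<Delta> :: "cdiag multiset" and L S S1 S2
  assume fL: "finite L" and SL: "S \<subseteq> zones L" and U: "S1 \<union> S2 = S"
    and h: "valid H \<Gamma> (\<Delta> + {#Unit (Venn L S1), Unit (Venn L S2)#})"
  have fz: "finite (zones L)" unfolding zones_def using fL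
    by (rule_tac finite_subset[of _ "Pow L \<times> Pow L"]) auto
  have f1: "finite S1" "finite S2" using U SL fz by (auto intro: finite_subset)
  show "valid H \<Gamma> (\<Delta> + {#Unit (Venn L S)#})" unfolding valid_def
  proof
    fix v :: "var \<Rightarrow> 'a"
    have "hJoin (zval v) S = hJoin (zval v) S1 \<squnion> hJoin (zval v) S2"
      using hJoin_union[OF f1] U by simp
    then show "msMeet (csem v) \<Gamma> \<le> msJoin (csem v) (\<Delta> + {#Unit (Venn L S)#})"
      using h[unfolded valid_def, rule_format, of v] by (simp add: sup_assoc)
  qed
next
  fix \<Gamma> \<Delta> :: "cdiag multiset" and L z
  assume fL: "finite L" and zL: "z \<in> zones L"
    and h: "valid H (image_mset PD (mset_set (fst z)) + image_mset ND (mset_set (snd z)) + \<Gamma>) \<Delta>"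
  have ff: "finite (fst z)" "finite (snd z)" using zones_fin[OF fL zL] by auto
  show "valid H ({#Unit (Venn L {z})#} + \<Gamma>) \<Delta>" unfolding valid_def
  proof
    fix v :: "var \<Rightarrow> 'a"
    have e1: "msMeet (csem v) (image_mset PD (mset_set (fst z))) = hMeet v (fst z)"
      using ff by (simp add: msMeet_image msMeet_mset_set comp_def)
    have e2: "msMeet (csem v) (image_mset ND (mset_set (snd z))) = hMeet (\<lambda>c. hneg (v c)) (snd z)"
      using ff by (simp add: msMeet_image msMeet_mset_set comp_def)
    show "msMeet (csem v) ({#Unit (Venn L {z})#} + \<Gamma>) \<le> msJoin (csem v) \<Delta>"
      using h[unfolded valid_def, rule_format, of v] e1 e2 by (simp add: zval_def inf_assoc)
  qed
next
  fix \<Gamma> \<Delta> :: "cdiag multiset" and L z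
  assume fL: "finite L" and zL: "z \<in> zones L"
    and hp: "\<forall>n\<in>fst z. valid H \<Gamma> (\<Delta> + {#PD n#})"
    and hn: "\<forall>m\<in>snd z. valid H \<Gamma> (\<Delta> + {#ND m#})"
  have ff: "finite (fst z)" "finite (snd z)" using zones_fin[OF fL zL] by auto
  show "valid H \<Gamma> (\<Delta> + {#Unit (Venn L {z})#})" unfolding valid_def
  proof
    fix v :: "var \<Rightarrow> 'a"
    let ?G = "msMeet (csem v) \<Gamma>" and ?D = "msJoin (csem v) \<Delta>"
    have "?G \<le> ?D \<squnion> hMeet v (fst z)"
      by (rule hMeet_ge[OF ff(1)]) (use hp in \<open>auto simp: valid_def sup_commute\<close>)
    moreover have "?G \<le> ?D \<squnion> hMeet (\<lambda>c. hneg (v c)) (snd z)"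
      by (rule hMeet_ge[OF ff(2)]) (use hn in \<open>auto simp: valid_def sup_commute\<close>)
    ultimately have "?G \<le> ?D \<squnion> zval v z"
      by (simp add: zval_def sup_inf_distrib1)
    then show "?G \<le> msJoin (csem v) (\<Delta> + {#Unit (Venn L {z})#})"
      by (simp add: sup_commute)
  qed
qed

end
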